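(* Let $n\ge1$. If $\mathcal W$ is an $(n,T(n))$-weakly Ramsey non-P-point in standard position on $\omega^2$, then there is a set $P\in\mathcal W$ such that every $n$-element subset of $P$ realizes some $n$-type.
   Context: Ultrafilters are nonprincipal. A non-P-point in standard position is an ultrafilter $\mathcal W$ on $\omega^2$ such that $\pi_1:\omega^2\to\omega$ (first projection) is neither finite-to-one nor constant on any set in $\mathcal W$. $\mathcal W$ is $(n,t)$-weakly Ramsey if for every partition of $[\omega^2]^n$ into finitely many pieces there is $H\in\mathcal W$ with $[H]^n$ meeting at most $t$ pieces. An $n$-type is a linear pre-order of the formal symbols $x_1,\dots,x_n,y_1,\dots,y_n$ with $y_1<\dots<y_n$ strictly, each $x_i<y_i$ strictly, and any two distinct equivalent symbols both $x$'s. An $n$-element set $\{\langle a_1,b_1\rangle,\dots,\langle a_n,b_n\rangle\}\subseteq\omega^2$ with $b_1<\dots<b_n$ realizes $\tau$ if for all symbols $s,t$: $s\le_\tau t$ iff $v(s)\le v(t)$, with $v(x_i)=a_i,v(y_i)=b_i$; a set with two elements sharing a second coordinate realizes no type. $T(n)$ is the number of $n$-types. *)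

theory Defs
  imports Main "HOL-Library.Ramsey"
begin

definition ultrafilter_on :: "'a set set \<Rightarrow> bool" where
  "ultrafilter_on U \<longleftrightarrow>
     UNIV \<in> U \<and> {} \<notin> U \<and>
     (\<forall>A B. A \<in> U \<and> A \<subseteq> B \<longrightarrow> B \<in> U) \<and>
     (\<forall>A B. A \<in> U \<and> B \<in> U \<longrightarrow> A \<inter> B \<in> U) \<and>
     (\<forall>A. A \<in> U \<or> - A \<in> U)"

definition nonprincipal :: "'a set set \<Rightarrow> bool" where
  "nonprincipal U \<longleftrightarrow> (\<forall>x. {x} \<notin> U)"

text \<open>omega^2 is nat \<times> nat; pi_1 is fst.\<close>
definition finite_to_one_on :: "('a \<Rightarrow> 'b) \<Rightarrow> 'a set \<Rightarrow> bool" where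
  "finite_to_one_on f A \<longleftrightarrow> (\<forall>y. finite {p \<in> A. f p = y})"

definition constant_on :: "('a \<Rightarrow> 'b) \<Rightarrow> 'a set \<Rightarrow> bool" where
  "constant_on f A \<longleftrightarrow> (\<exists>y. \<forall>p \<in> A. f p = y)"

definition non_P_point_std :: "(nat \<times> nat) set set \<Rightarrow> bool" where
  "non_P_point_std W \<longleftrightarrow> ultrafilter_on W \<and> nonprincipal W \<and>
     (\<forall>A \<in> W. \<not> finite_to_one_on fst A \<and> \<not> constant_on fst A)"

text \<open>(n,t)-weakly Ramsey: every partition of [omega^2]^n into finitely many pieces
  (a colouring with k colours) has a homogeneous-ish H in W meeting at most t pieces.\<close>
definition weakly_ramsey :: "(nat \<times> nat) set set \<Rightarrow> nat \<Rightarrow> nat \<Rightarrow> bool" where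
  "weakly_ramsey W n t \<longleftrightarrow>
     (\<forall>(k::nat) (c :: (nat \<times> nat) set \<Rightarrow> nat). c \<in> nsets UNIV n \<rightarrow> {..<k} \<longrightarrow>
        (\<exists>H \<in> W. card (c ` nsets H n) \<le> t))"

text \<open>Formal symbols: (False, i) is x_i, (True, i) is y_i, for 1 \<le> i \<le> n.\<close>
definition symbols :: "nat \<Rightarrow> (bool \<times> nat) set" where
  "symbols n = UNIV \<times> {1..n}"

definition strict_rel :: "('a \<times> 'a) set \<Rightarrow> 'a \<Rightarrow> 'a \<Rightarrow> bool" where
  "strict_rel r s t \<longleftrightarrow> (s, t) \<in> r \<and> (t, s) \<notin> r"

definition is_type :: "nat \<Rightarrow> ((bool \<times> nat) \<times> (bool \<times> nat)) set \<Rightarrow> bool" where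
  "is_type n \<tau> \<longleftrightarrow>
     \<tau> \<subseteq> symbols n \<times> symbols n \<and>
     refl_on (symbols n) \<tau> \<and> trans \<tau> \<and> total_on (symbols n) \<tau> \<and>
     (\<forall>i j. 1 \<le> i \<and> i < j \<and> j \<le> n \<longrightarrow> strict_rel \<tau> (True, i) (True, j)) \<and>
     (\<forall>i. 1 \<le> i \<and> i \<le> n \<longrightarrow> strict_rel \<tau> (False, i) (True, i)) \<and>
     (\<forall>s \<in> symbols n. \<forall>t \<in> symbols n.
        s \<noteq> t \<and> (s, t) \<in> \<tau> \<and> (t, s) \<in> \<tau> \<longrightarrow> fst s = False \<and> fst t = False)"

definition T :: "nat \<Rightarrow> nat" where
  "T n = card {\<tau>. is_type n \<tau>}"

definition realizes :: "nat \<Rightarrow> ((bool \<times> nat) \<times> (bool \<times> nat)) set \<Rightarrow> (nat \<times> nat) set \<Rightarrow> bool" where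
  "realizes n \<tau> X \<longleftrightarrow>
     (\<exists>a b :: nat \<Rightarrow> nat.
        X = (\<lambda>i. (a i, b i)) ` {1..n} \<and> strict_mono_on {1..n} b \<and>
        (let v = (\<lambda>s. if fst s then b (snd s) else a (snd s)) in
          \<forall>s \<in> symbols n. \<forall>t \<in> symbols n. (s, t) \<in> \<tau> \<longleftrightarrow> v s \<le> v t))"

end

theory Submission
  imports Defs
begin

lemma smono_eq:
  fixes b b' :: "nat \<Rightarrow> nat"
  assumes "strict_mono_on {1..n} b" "strict_mono_on {1..n} b'" "b ` {1..n} = b' ` {1..n}"
    and "i \<in> {1..n}"
  shows "b i = b' i"
proof -
  have s: "sorted_wrt (<) (map f [1..<Suc n])" if "strict_mono_on {1..n} f" for f :: "nat \<Rightarrow> nat"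
    unfolding sorted_wrt_map
    by (rule sorted_wrt_mono_rel[OF _ sorted_wrt_upt]) (use that in \<open>auto simp: strict_mono_on_def\<close>)
  have "map b [1..<Suc n] = map b' [1..<Suc n]"
  proof (rule sorted_distinct_set_unique)
    have st: "set (map f [1..<Suc n]) = f ` {1..n}" for f :: "nat \<Rightarrow> nat"
      by (simp only: set_map set_upt atLeastLessThanSuc_atLeastAtMost)
    show "set (map b [1..<Suc n]) = set (map b' [1..<Suc n])" unfolding st by (rule assms(3))
  qed (use s[OF assms(1)] s[OF assms(2)] in \<open>simp_all only: strict_sorted_iff\<close>)
  then have "\<forall>x\<in>set [1..<Suc n]. b x = b' x" by (simp only: map_eq_conv)
  then show ?thesis using assms(4) by (metis atLeastLessThanSuc_atLeastAtMost set_upt)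
qed

lemma smono_inj:
  fixes b :: "nat \<Rightarrow> nat"
  assumes "strict_mono_on A b" "i \<in> A" "j \<in> A" "b i = b j"
  shows "i = j"
  using assms by (metis linorder_neq_iff order_less_irrefl strict_mono_onD)

lemma realizes_unique:
  assumes t1: "is_type n \<tau>" and t2: "is_type n \<tau>'"
    and r1: "realizes n \<tau> X" and r2: "realizes n \<tau>' X"
  shows "\<tau> = \<tau>'"
proof -
  obtain a b where X: "X = (\<lambda>i. (a i, b i)) ` {1..n}" and sb: "strict_mono_on {1..n} b"
    and v: "\<forall>s \<in> symbols n. \<forall>t \<in> symbols n. (s, t) \<in> \<tau> \<longleftrightarrow>
      (\<lambda>s. if fst s then b (snd s) else a (snd s)) s \<le> (\<lambda>s. if fst s then b (snd s) else a (snd s)) t"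
    using r1 unfolding realizes_def Let_def by blast
  obtain a' b' where X': "X = (\<lambda>i. (a' i, b' i)) ` {1..n}" and sb': "strict_mono_on {1..n} b'"
    and v': "\<forall>s \<in> symbols n. \<forall>t \<in> symbols n. (s, t) \<in> \<tau>' \<longleftrightarrow>
      (\<lambda>s. if fst s then b' (snd s) else a' (snd s)) s \<le> (\<lambda>s. if fst s then b' (snd s) else a' (snd s)) t"
    using r2 unfolding realizes_def Let_def by blast
  have "snd ` X = b ` {1..n}" unfolding X by (auto simp: image_image)
  moreover have "snd ` X = b' ` {1..n}" unfolding X' by (auto simp: image_image)
  ultimately have bb: "b i = b' i" if "i \<in> {1..n}" for i
    using smono_eq[OF sb sb'] that by metis
  have aa: "a i = a' i" if i: "i \<in> {1..n}" for i
  proof -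
    have "(a i, b i) \<in> X" using i X by auto
    then obtain j where j: "j \<in> {1..n}" "a i = a' j" "b i = b' j" unfolding X' by auto
    then have "b' i = b' j" using bb[OF i] by simp
    then have "i = j" using smono_inj[OF sb' i j(1)] by simp
    then show ?thesis using j by simp
  qed
  have vv: "(if fst s then b (snd s) else a (snd s)) = (if fst s then b' (snd s) else a' (snd s))"
    if "s \<in> symbols n" for s
    using that aa bb by (auto simp: symbols_def)
  have s1: "\<tau> \<subseteq> symbols n \<times> symbols n" and s2: "\<tau>' \<subseteq> symbols n \<times> symbols n"
    using t1 t2 unfolding is_type_def by auto
  show ?thesis
  proof (intro set_eqI iffI)
    fix p assume "p \<in> \<tau>"
    then obtain s t where p: "p = (s, t)" "s \<in> symbols n" "t \<in> symbols n" using s1 by blast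
    then show "p \<in> \<tau>'" using v v' vv \<open>p \<in> \<tau>\<close> by auto
  next
    fix p assume "p \<in> \<tau>'"
    then obtain s t where p: "p = (s, t)" "s \<in> symbols n" "t \<in> symbols n" using s2 by blast
    then show "p \<in> \<tau>" using v v' vv \<open>p \<in> \<tau>'\<close> by auto
  qed
qed

lemma uf_up:
  assumes "ultrafilter_on W" "A \<in> W" "A \<subseteq> B" shows "B \<in> W"
proof -
  have "\<forall>A B. A \<in> W \<and> A \<subseteq> B \<longrightarrow> B \<in> W" using assms(1) unfolding ultrafilter_on_def by (elim conjE) assumption
  then show ?thesis using assms(2,3) by blast
qed

lemma uf_int: "ultrafilter_on W \<Longrightarrow> A \<in> W \<Longrightarrow> B \<in> W \<Longrightarrow> A \<inter> B \<in> W"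
  unfolding ultrafilter_on_def by (elim conjE) (erule allE[of _ A], erule allE[of _ B], erule impE, rule conjI, assumption+)

lemma uf_compl: "ultrafilter_on W \<Longrightarrow> A \<notin> W \<Longrightarrow> - A \<in> W"
  unfolding ultrafilter_on_def by (elim conjE) (erule allE[of _ A], erule disjE, simp_all)

lemma uf_empty: "ultrafilter_on W \<Longrightarrow> {} \<notin> W"
  unfolding ultrafilter_on_def by (elim conjE)

lemma uf_union:
  assumes "ultrafilter_on W" "A \<union> B \<in> W" shows "A \<in> W \<or> B \<in> W"
proof (rule ccontr)
  assume "\<not> (A \<in> W \<or> B \<in> W)"
  then have "- A \<in> W" "- B \<in> W" using uf_compl[OF assms(1)] by auto
  then have "(A \<union> B) \<inter> - A \<inter> - B \<in> W" using uf_int[OF assms(1)] assms(2) by metis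
  moreover have "(A \<union> B) \<inter> - A \<inter> - B = {}" by blast
  ultimately show False using uf_empty[OF assms(1)] by simp
qed

lemma bounded_const:
  fixes W :: "(nat \<times> nat) set set" and m :: nat
  assumes uf: "ultrafilter_on W" shows "S \<in> W \<Longrightarrow> \<forall>p\<in>S. fst p \<le> m \<Longrightarrow> \<exists>a. {p\<in>S. fst p = a} \<in> W"
proof (induction m arbitrary: S)
  case 0
  then have "{p\<in>S. fst p = 0} = S" by auto
  then show ?case using 0 by metis
next
  case (Suc m)
  have "S = {p\<in>S. fst p \<le> m} \<union> {p\<in>S. fst p = Suc m}" using Suc.prems by auto
  then have "{p\<in>S. fst p \<le> m} \<in> W \<or> {p\<in>S. fst p = Suc m} \<in> W"
    using uf_union[OF uf] Suc.prems(1) by simp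
  then show ?case
  proof
    assume h: "{p\<in>S. fst p \<le> m} \<in> W"
    have "\<forall>p\<in>{p\<in>S. fst p \<le> m}. fst p \<le> m" by blast
    then obtain a where "{p\<in>{p\<in>S. fst p \<le> m}. fst p = a} \<in> W" using Suc.IH[OF h] by blast
    moreover have "{p\<in>{p\<in>S. fst p \<le> m}. fst p = a} \<subseteq> {p\<in>S. fst p = a}" by blast
    ultimately show ?case using uf_up[OF uf] by blast
  next
    assume "{p\<in>S. fst p = Suc m} \<in> W" then show ?case by blast
  qed
qed

lemma unbounded:
  assumes np: "non_P_point_std W" and H: "H \<in> W"
  shows "\<exists>a>m. infinite {b. (a,b) \<in> H}"
proof (rule ccontr)
  assume na: "\<not> ?thesis"
  have uf: "ultrafilter_on W" using np unfolding non_P_point_std_def by simp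
  have np2: "\<And>A. A \<in> W \<Longrightarrow> \<not> finite_to_one_on fst A \<and> \<not> constant_on fst A"
    using np unfolding non_P_point_std_def by simp
  define G where "G = {p\<in>H. infinite {b. (fst p, b) \<in> H}}"
  have "finite_to_one_on fst (H - G)"
    unfolding finite_to_one_on_def
  proof
    fix y
    show "finite {p \<in> H - G. fst p = y}"
    proof (cases "finite {b. (y, b) \<in> H}")
      case True
      have "{p \<in> H - G. fst p = y} \<subseteq> {y} \<times> {b. (y, b) \<in> H}" by auto
      then show ?thesis using True finite_subset by blast
    next
      case False
      have e: "{p \<in> H - G. fst p = y} = {}" using False by (auto simp: G_def)
      show ?thesis unfolding e by (rule finite.emptyI)
    qed
  qed
  then have "H - G \<notin> W" using np2 by blast
  moreover have "H = G \<union> (H - G)" unfolding G_def by blast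
  ultimately have GW: "G \<in> W" using uf_union[OF uf] H by metis
  have "\<forall>p\<in>G. fst p \<le> m" using na unfolding G_def by (auto simp: not_less)
  then obtain a where "{p\<in>G. fst p = a} \<in> W" using bounded_const[OF uf GW] by blast
  moreover have "constant_on fst {p\<in>G. fst p = a}" unfolding constant_on_def by blast
  ultimately show False using np2 by blast
qed



lemma realize_type:
  assumes ty: "is_type n \<tau>" and ub: "\<And>m. \<exists>a>m. infinite {b. (a,b) \<in> H}"
  shows "\<exists>X \<in> nsets H n. realizes n \<tau> X"
proof -
  define S where "S = symbols n"
  have finS: "finite S" unfolding S_def symbols_def by simp
  have memS: "(c, i) \<in> S \<longleftrightarrow> i \<in> {1..n}" for c i unfolding S_def symbols_def by auto
  have sub: "\<tau> \<subseteq> S \<times> S" and rfl: "\<And>s. s \<in> S \<Longrightarrow> (s,s) \<in> \<tau>" and tr: "trans \<tau>"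
    and tot: "\<And>s t. s \<in> S \<Longrightarrow> t \<in> S \<Longrightarrow> s \<noteq> t \<Longrightarrow> (s,t) \<in> \<tau> \<or> (t,s) \<in> \<tau>"
    and yy: "\<And>i j. 1 \<le> i \<Longrightarrow> i < j \<Longrightarrow> j \<le> n \<Longrightarrow> strict_rel \<tau> (True, i) (True, j)"
    and xy: "\<And>i. 1 \<le> i \<Longrightarrow> i \<le> n \<Longrightarrow> strict_rel \<tau> (False, i) (True, i)"
    and tie: "\<And>s t. s \<in> S \<Longrightarrow> t \<in> S \<Longrightarrow> s \<noteq> t \<Longrightarrow> (s, t) \<in> \<tau> \<Longrightarrow> (t, s) \<in> \<tau> \<Longrightarrow> fst s = False \<and> fst t = False"
    using ty unfolding is_type_def S_def refl_on_def total_on_def by blast+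
  define r where "r s = card {t\<in>S. strict_rel \<tau> t s}" for s
  have subs: "{u\<in>S. strict_rel \<tau> u s} \<subseteq> {u\<in>S. strict_rel \<tau> u t}" if "(s,t) \<in> \<tau>" for s t
  proof
    fix u assume "u \<in> {u\<in>S. strict_rel \<tau> u s}"
    then have "u \<in> S" "(u,s) \<in> \<tau>" "(s,u) \<notin> \<tau>" unfolding strict_rel_def by auto
    moreover have "(u,t) \<in> \<tau>" using tr \<open>(u,s) \<in> \<tau>\<close> that by (meson transD)
    moreover have "(t,u) \<notin> \<tau>" using tr that \<open>(s,u) \<notin> \<tau>\<close> by (meson transD)
    ultimately show "u \<in> {u\<in>S. strict_rel \<tau> u t}" unfolding strict_rel_def by auto
  qed
  have rank_le: "r s \<le> r t" if "(s,t) \<in> \<tau>" for s t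
    unfolding r_def using subs[OF that] finS by (intro card_mono) auto
  have rank_lt: "r s < r t" if "s \<in> S" "strict_rel \<tau> s t" for s t
  proof -
    have "(s,t) \<in> \<tau>" using that unfolding strict_rel_def by auto
    then have s1: "{u\<in>S. strict_rel \<tau> u s} \<subseteq> {u\<in>S. strict_rel \<tau> u t}" by (rule subs)
    have "s \<in> {u\<in>S. strict_rel \<tau> u t}" "s \<notin> {u\<in>S. strict_rel \<tau> u s}"
      using that unfolding strict_rel_def by auto
    then have "{u\<in>S. strict_rel \<tau> u s} \<subset> {u\<in>S. strict_rel \<tau> u t}" using s1 by blast
    then show ?thesis unfolding r_def using finS by (intro psubset_card_mono) auto
  qed
  have rank_iff: "(s,t) \<in> \<tau> \<longleftrightarrow> r s \<le> r t" if "s \<in> S" "t \<in> S" for s t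
  proof
    assume "r s \<le> r t"
    show "(s,t) \<in> \<tau>"
    proof (rule ccontr)
      assume "(s,t) \<notin> \<tau>"
      then have "s \<noteq> t" using rfl[OF that(1)] by metis
      then have "(t,s) \<in> \<tau>" using tot that \<open>(s,t) \<notin> \<tau>\<close> by blast
      then have "strict_rel \<tau> t s" using \<open>(s,t) \<notin> \<tau>\<close> unfolding strict_rel_def by auto
      then have "r t < r s" using rank_lt that by blast
      then show False using \<open>r s \<le> r t\<close> by simp
    qed
  qed (rule rank_le)
  have rank_bound: "r s < card S" if "s \<in> S" for s
  proof -
    have "{u\<in>S. strict_rel \<tau> u s} \<subset> S" using that unfolding strict_rel_def by auto
    then show ?thesis unfolding r_def using finS by (intro psubset_card_mono) auto
  qed
  define xr where "xr i = r (False, i)" for i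
  define yr where "yr i = r (True, i)" for i
  have xy_lt: "xr i < yr i" if "i \<in> {1..n}" for i
    unfolding xr_def yr_def using that xy memS by (intro rank_lt) auto
  have yy_lt: "yr i < yr j" if "i \<in> {1..n}" "j \<in> {1..n}" "i < j" for i j
    unfolding yr_def using that yy memS by (intro rank_lt) auto
  have yy_inj: "i = j" if "i \<in> {1..n}" "j \<in> {1..n}" "yr i = yr j" for i j
    using yy_lt[of i j] yy_lt[of j i] that by (metis linorder_neq_iff order_less_irrefl)
  have xy_ne: "xr i \<noteq> yr j" if "i \<in> {1..n}" "j \<in> {1..n}" for i j
  proof
    assume e: "xr i = yr j"
    have s: "(False, i) \<in> S" "(True, j) \<in> S" using that memS by auto
    have "((False,i),(True,j)) \<in> \<tau>" "((True,j),(False,i)) \<in> \<tau>"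
      using rank_iff[OF s] rank_iff[OF s(2) s(1)] e unfolding xr_def yr_def by auto
    then show False using tie[OF s] by auto
  qed
  have claim: "\<exists>g. (\<forall>i j. i < j \<longrightarrow> j < k \<longrightarrow> g i < (g j :: nat)) \<and>
      (\<forall>i\<in>{1..n}. xr i < k \<longrightarrow> infinite {b. (g (xr i), b) \<in> H}) \<and>
      (\<forall>i\<in>{1..n}. yr i < k \<longrightarrow> (g (xr i), g (yr i)) \<in> H)" for k
  proof (induction k)
    case 0
    show ?case by auto
  next
    case (Suc k)
    then obtain g where g1: "\<And>i j. i < j \<Longrightarrow> j < k \<Longrightarrow> g i < (g j :: nat)"
      and g2: "\<And>i. i\<in>{1..n} \<Longrightarrow> xr i < k \<Longrightarrow> infinite {b. (g (xr i), b) \<in> H}"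
      and g3: "\<And>i. i\<in>{1..n} \<Longrightarrow> yr i < k \<Longrightarrow> (g (xr i), g (yr i)) \<in> H" by blast
    define B where "B = (\<Sum>i<k. g i)"
    have gB: "g i \<le> B" if "i < k" for i
      unfolding B_def using that by (intro member_le_sum) auto
    have mono': "\<forall>i j. i < j \<longrightarrow> j < Suc k \<longrightarrow> (g(k := v)) i < (g(k := v)) j" if "v > B" for v
    proof (intro allI impI)
      fix i j :: nat assume "i < j" "j < Suc k"
      then show "(g(k := v)) i < (g(k := v)) j"
        using g1[of i j] gB[of i] that by (cases "j = k") auto
    qed
    consider (X) "\<exists>i\<in>{1..n}. xr i = k" | (Y) "\<not> (\<exists>i\<in>{1..n}. xr i = k)" "\<exists>j\<in>{1..n}. yr j = k"
      | (N) "\<not> (\<exists>i\<in>{1..n}. xr i = k)" "\<not> (\<exists>j\<in>{1..n}. yr j = k)" by blast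
    then show ?case
    proof cases
      case X
      then obtain i0 where i0: "i0 \<in> {1..n}" "xr i0 = k" by blast
      obtain a where a: "a > B" "infinite {b. (a,b) \<in> H}" using ub by blast
      have "(\<forall>i\<in>{1..n}. xr i < Suc k \<longrightarrow> infinite {b. ((g(k := a)) (xr i), b) \<in> H})"
        using g2 a by (metis fun_upd_apply less_Suc_eq)
      moreover have "(\<forall>i\<in>{1..n}. yr i < Suc k \<longrightarrow> ((g(k := a)) (xr i), (g(k := a)) (yr i)) \<in> H)"
      proof (intro ballI impI)
        fix i assume i: "i \<in> {1..n}" "yr i < Suc k"
        have "yr i \<noteq> k" using xy_ne[OF i0(1) i(1)] i0 by auto
        then have "yr i < k" using i by auto
        moreover have "xr i < k" using xy_lt[OF i(1)] \<open>yr i < k\<close> by auto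
        ultimately show "((g(k := a)) (xr i), (g(k := a)) (yr i)) \<in> H" using g3[OF i(1)] by auto
      qed
      ultimately show ?thesis using mono'[OF a(1)] by blast
    next
      case Y
      then obtain j0 where j0: "j0 \<in> {1..n}" "yr j0 = k" by blast
      have "xr j0 < k" using xy_lt[OF j0(1)] j0 by auto
      then have "infinite {b. (g (xr j0), b) \<in> H}" using g2 j0 by auto
      then have "\<exists>b>B. b \<in> {b. (g (xr j0), b) \<in> H}" unfolding infinite_nat_iff_unbounded by blast
      then obtain b where b: "b > B" "(g (xr j0), b) \<in> H" by blast
      have "(\<forall>i\<in>{1..n}. xr i < Suc k \<longrightarrow> infinite {b'. ((g(k := b)) (xr i), b') \<in> H})"
        using g2 Y(1) by (metis fun_upd_apply less_Suc_eq)
      moreover have "(\<forall>i\<in>{1..n}. yr i < Suc k \<longrightarrow> ((g(k := b)) (xr i), (g(k := b)) (yr i)) \<in> H)"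
      proof (intro ballI impI)
        fix i assume i: "i \<in> {1..n}" "yr i < Suc k"
        have xk: "xr i \<noteq> k" using Y(1) i by auto
        show "((g(k := b)) (xr i), (g(k := b)) (yr i)) \<in> H"
        proof (cases "yr i = k")
          case True
          then have "i = j0" using yy_inj[OF i(1) j0(1)] j0 by simp
          then show ?thesis using True b xk by simp
        next
          case False
          then have "yr i < k" using i by auto
          then show ?thesis using g3[OF i(1)] xk False by simp
        qed
      qed
      ultimately show ?thesis using mono'[OF b(1)] by blast
    next
      case N
      have "(\<forall>i\<in>{1..n}. xr i < Suc k \<longrightarrow> infinite {b'. ((g(k := Suc B)) (xr i), b') \<in> H})"
        using g2 N(1) by (metis fun_upd_apply less_Suc_eq)
      moreover have "(\<forall>i\<in>{1..n}. yr i < Suc k \<longrightarrow> ((g(k := Suc B)) (xr i), (g(k := Suc B)) (yr i)) \<in> H)"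
      proof (intro ballI impI)
        fix i assume i: "i \<in> {1..n}" "yr i < Suc k"
        have xk: "xr i \<noteq> k" "yr i \<noteq> k" using N i by auto
        then have "yr i < k" using i by auto
        then show "((g(k := Suc B)) (xr i), (g(k := Suc B)) (yr i)) \<in> H" using g3[OF i(1)] xk by simp
      qed
      ultimately show ?thesis using mono'[of "Suc B"] by blast
    qed
  qed
  obtain g where g1: "\<And>i j. i < j \<Longrightarrow> j < card S \<Longrightarrow> g i < (g j :: nat)"
      and g3: "\<And>i. i\<in>{1..n} \<Longrightarrow> yr i < card S \<Longrightarrow> (g (xr i), g (yr i)) \<in> H"
    using claim[of "card S"] by blast
  have gle: "i \<le> j \<longleftrightarrow> g i \<le> g j" if "i < card S" "j < card S" for i j
    using g1[of i j] g1[of j i] that by (metis le_less not_le)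
  define a where "a i = g (xr i)" for i
  define b where "b i = g (yr i)" for i
  define X where "X = (\<lambda>i. (a i, b i)) ` {1..n}"
  have sb: "strict_mono_on {1..n} b"
  proof (rule strict_mono_onI)
    fix i j assume "i \<in> {1..n}" "j \<in> {1..n}" "i < j"
    then show "b i < b j" unfolding b_def using yy_lt g1 rank_bound memS unfolding yr_def by metis
  qed
  have vS: "(\<lambda>s. if fst s then b (snd s) else a (snd s)) s = g (r s)" for s
    unfolding a_def b_def xr_def yr_def by (cases s) auto
  have real: "realizes n \<tau> X"
    unfolding realizes_def Let_def
  proof (intro exI conjI)
    show "X = (\<lambda>i. (a i, b i)) ` {1..n}" by (rule X_def)
    show "strict_mono_on {1..n} b" by (rule sb)
    show "\<forall>s\<in>symbols n. \<forall>t\<in>symbols n. ((s, t) \<in> \<tau>) =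
        ((if fst s then b (snd s) else a (snd s)) \<le> (if fst t then b (snd t) else a (snd t)))"
    proof (intro ballI)
      fix s t assume "s \<in> symbols n" "t \<in> symbols n"
      then have st: "s \<in> S" "t \<in> S" unfolding S_def by auto
      show "((s, t) \<in> \<tau>) = ((if fst s then b (snd s) else a (snd s)) \<le> (if fst t then b (snd t) else a (snd t)))"
        using vS[of s] vS[of t] rank_iff[OF st] gle[OF rank_bound[OF st(1)] rank_bound[OF st(2)]] by simp
    qed
  qed
  have "X \<subseteq> H" unfolding X_def a_def b_def using g3 rank_bound memS unfolding yr_def by auto
  moreover have "inj_on (\<lambda>i. (a i, b i)) {1..n}"
    using smono_inj[OF sb] by (auto simp: inj_on_def)
  then have "card X = n" unfolding X_def by (simp add: card_image)
  moreover have "finite X" unfolding X_def by simp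
  ultimately have "X \<in> nsets H n" unfolding nsets_def by blast
  then show ?thesis using real by blast
qed



theorem mainTheorem4:
  fixes n :: nat and W :: "(nat \<times> nat) set set"
  assumes "n \<ge> 1"
    and "non_P_point_std W"
    and "weakly_ramsey W n (T n)"
  shows "\<exists>P \<in> W. \<forall>X \<in> nsets P n. \<exists>\<tau>. is_type n \<tau> \<and> realizes n \<tau> X"
proof -
  define Ty where "Ty = {\<tau>. is_type n \<tau>}"
  have "Ty \<subseteq> Pow (symbols n \<times> symbols n)" unfolding Ty_def is_type_def by auto
  moreover have fs: "finite (symbols n)" unfolding symbols_def by simp
  have "finite (Pow (symbols n \<times> symbols n))" using fs by simp
  ultimately have finTy: "finite Ty" by (rule finite_subset)
  obtain h where h: "bij_betw h {0..<T n} Ty"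
    using ex_bij_betw_nat_finite[OF finTy] unfolding T_def Ty_def by blast
  define idx where "idx = the_inv_into {0..<T n} h"
  have idx_lt: "idx \<tau> < T n" if "\<tau> \<in> Ty" for \<tau>
  proof -
    have "idx \<tau> \<in> {0..<T n}" unfolding idx_def
      using h that by (intro the_inv_into_into) (auto simp: bij_betw_def)
    then show ?thesis by simp
  qed
  have idx_h: "idx (h k) = k" if "k < T n" for k
    unfolding idx_def using h that by (intro the_inv_into_f_f) (auto simp: bij_betw_def)
  define c where "c X = (if \<exists>\<tau>. is_type n \<tau> \<and> realizes n \<tau> X
      then idx (THE \<tau>. is_type n \<tau> \<and> realizes n \<tau> X) else T n)" for X
  have c_le: "c X \<le> T n" for X
  proof (cases "\<exists>\<tau>. is_type n \<tau> \<and> realizes n \<tau> X")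
    case True
    then obtain \<tau> where t: "is_type n \<tau>" "realizes n \<tau> X" by blast
    have "(THE \<tau>. is_type n \<tau> \<and> realizes n \<tau> X) = \<tau>"
    proof (rule the_equality)
      fix \<tau>' assume "is_type n \<tau>' \<and> realizes n \<tau>' X"
      then show "\<tau>' = \<tau>" using realizes_unique[of n \<tau>' \<tau> X] t by blast
    qed (use t in simp)
    then show ?thesis unfolding c_def using True idx_lt[of \<tau>] t unfolding Ty_def by auto
  next
    case False
    then show ?thesis unfolding c_def by (simp only: if_False order_refl)
  qed
  have "c \<in> nsets UNIV n \<rightarrow> {..<Suc (T n)}" using c_le by (simp add: Pi_iff less_Suc_eq_le)
  have wr: "\<forall>(k::nat) (c :: (nat \<times> nat) set \<Rightarrow> nat). c \<in> nsets UNIV n \<rightarrow> {..<k} \<longrightarrow>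
        (\<exists>H \<in> W. card (c ` nsets H n) \<le> T n)"
    using assms(3) unfolding weakly_ramsey_def .
  have "\<exists>H \<in> W. card (c ` nsets H n) \<le> T n"
    using wr[THEN spec[of _ "Suc (T n)"], THEN spec[of _ c], THEN mp, OF \<open>c \<in> nsets UNIV n \<rightarrow> {..<Suc (T n)}\<close>] .
  then obtain H where HW: "H \<in> W" and Hc: "card (c ` nsets H n) \<le> T n" by (elim bexE)
  have ub: "\<And>m. \<exists>a>m. infinite {b. (a,b) \<in> H}" by (rule unbounded[OF assms(2) HW])
  show ?thesis
  proof (intro bexI[OF _ HW] ballI)
    fix X0 assume X0: "X0 \<in> nsets H n"
    show "\<exists>\<tau>. is_type n \<tau> \<and> realizes n \<tau> X0"
    proof (rule ccontr)
    assume bad: "\<not> (\<exists>\<tau>. is_type n \<tau> \<and> realizes n \<tau> X0)"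
    have "{..T n} \<subseteq> c ` nsets H n"
    proof
      fix k assume "k \<in> {..T n}"
      then consider "k < T n" | "k = T n" by fastforce
      then show "k \<in> c ` nsets H n"
      proof cases
        case 1
        then have hk: "h k \<in> Ty" using h by (auto simp: bij_betw_def)
        then have tk: "is_type n (h k)" unfolding Ty_def by simp
        obtain X where X: "X \<in> nsets H n" "realizes n (h k) X" using realize_type[OF tk ub] by blast
        have "(THE \<tau>. is_type n \<tau> \<and> realizes n \<tau> X) = h k"
        proof (rule the_equality)
          fix \<tau>' assume "is_type n \<tau>' \<and> realizes n \<tau>' X"
          then show "\<tau>' = h k" using realizes_unique[of n \<tau>' "h k" X] tk X(2) by blast
        qed (use tk X(2) in simp)
        then have "c X = k" unfolding c_def using tk X(2) idx_h[OF 1] by auto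
        then show ?thesis using X(1) by blast
      next
        case 2
        have "c X0 = T n" unfolding c_def using bad by (rule if_not_P)
        then have "c X0 = k" using 2 by simp
        then show ?thesis using X0 by blast
      qed
    qed
    moreover have "finite (c ` nsets H n)"
    proof (rule finite_subset[of _ "{..T n}"])
      show "c ` nsets H n \<subseteq> {..T n}" using c_le by auto
    qed simp
    ultimately have "card {..T n} \<le> card (c ` nsets H n)" by (rule card_mono[rotated])
    then show False using Hc by simp
    qed
  qed
qed


end
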